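(* Let $\bar A\in\mathbb{R}^{n\times n}$ be Hurwitz, $\bar Q=\bar Q^T\succeq0$, and consider $\dot{\mathbf{x}}=\bar A\mathbf{x}$, $\mathbf{x}(t_0)=\mathbf{x}_0$, with cost $J=\int_{t_0}^\infty\mathbf{x}^T\bar Q\mathbf{x}\,dt$. For $Y\in\mathbb{R}^{n\times n}$ (Krotov function $q=\mathbf{x}^TY\mathbf{x}$) define $J_{eq}(Y)=\mathbf{x}_0^TY\mathbf{x}_0+\int_{t_0}^\infty\mathbf{x}(t)^T(\bar A^TY+Y\bar A+\bar Q)\mathbf{x}(t)\,dt$, where $\mathbf{x}(t)$ is the solution of the system. Let $Y^*$ be the solution of $\bar A^TY+Y\bar A+\bar Q=0$ and $J^*=\mathbf{x}_0^TY^*\mathbf{x}_0$. Then (1) for every symmetric $Y\succeq0$, $J_{eq}(Y)\ge J^*$; (2) if $t_0=0$, then $J_{eq}(Y)=J^*$ for every matrix $Y$.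
   Context: $J_{eq}(Y)$ is the Krotov-equivalent form of the cost for $q(\mathbf{x})=\mathbf{x}^TY\mathbf{x}$: $q(\mathbf{x}_0)+\int s\,dt$ with $s=\frac{\partial q}{\partial\mathbf{x}}\bar A\mathbf{x}+\mathbf{x}^T\bar Q\mathbf{x}$ (the terminal term vanishes since $\mathbf{x}(t)\to0$). *)

theory Defs
  imports "HOL-Analysis.Analysis"
begin

definition hurwitz :: "real^'n^'n \<Rightarrow> bool" where
  "hurwitz A \<longleftrightarrow>
     (\<forall>(l::complex) (v::complex^'n). v \<noteq> 0 \<and>
        (\<chi> i. \<Sum>j\<in>UNIV. complex_of_real (A$i$j) * v$j) = (\<chi> i. l * v$i) \<longrightarrow> Re l < 0)"

definition psd :: "real^'n^'n \<Rightarrow> bool" where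
  "psd M \<longleftrightarrow> transpose M = M \<and> (\<forall>v. 0 \<le> v \<bullet> (M *v v))"

definition quad :: "real^'n^'n \<Rightarrow> real^'n \<Rightarrow> real" where
  "quad M v = v \<bullet> (M *v v)"

definition Jeq :: "real^'n^'n \<Rightarrow> real^'n^'n \<Rightarrow> real \<Rightarrow> real^'n \<Rightarrow> (real \<Rightarrow> real^'n) \<Rightarrow> real^'n^'n \<Rightarrow> real" where
  "Jeq A Q t0 x0 x Y = quad Y x0 +
     integral {t0..} (\<lambda>t. quad (transpose A ** Y + Y ** A + Q) (x t))"

end

theory Submission
  imports Defs "Jordan_Normal_Form.Schur_Decomposition"
begin

lemma eventually_below:
  fixes h h' :: "real \<Rightarrow> real"
  assumes der: "\<And>t. t \<ge> T \<Longrightarrow> (h has_real_derivative h' t) (at t)"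
    and dec: "\<And>t. t \<ge> T \<Longrightarrow> h t \<ge> \<delta> \<Longrightarrow> h' t \<le> -d" and d: "d > 0"
  shows "eventually (\<lambda>t. h t \<le> \<delta>) at_top"
proof -
  have cont: "continuous_on {u..v} h" if "u \<ge> T" for u v
  proof (intro continuous_at_imp_continuous_on ballI)
    fix x assume "x \<in> {u..v}"
    thus "isCont h x" using DERIV_isCont[OF der[of x]] that by auto
  qed
  obtain s where s: "s \<ge> T" "h s < \<delta>"
  proof (rule ccontr)
    assume "\<not> thesis"
    with that have ge: "h s \<ge> \<delta>" if "s \<ge> T" for s using that by force
    define t where "t = T + (\<bar>h T\<bar> + \<bar>\<delta>\<bar>) / d + 1"
    have "0 \<le> (\<bar>h T\<bar> + \<bar>\<delta>\<bar>) / d" using d by simp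
    hence tT: "T < t" unfolding t_def by linarith
    obtain \<xi> where \<xi>: "T < \<xi>" "\<xi> < t" "h t - h T = (t - T) * h' \<xi>"
      using MVT2[OF tT, of h h'] der by auto
    have "h' \<xi> \<le> -d" using dec[of \<xi>] ge[of \<xi>] \<xi> by auto
    hence "(t - T) * h' \<xi> \<le> (t - T) * (-d)" using tT by (intro mult_left_mono) auto
    also have "(t - T) * (-d) = -(\<bar>h T\<bar> + \<bar>\<delta>\<bar>) - d" unfolding t_def using d
      by (simp add: field_simps)
    finally have "h t < \<delta>" using \<xi>(3) d by linarith
    with ge[of t] tT show False by auto
  qed
  show ?thesis unfolding eventually_at_top_linorder
  proof (intro exI[of _ s] allI impI)
    fix t assume ts: "t \<ge> s"
    show "h t \<le> \<delta>"
    proof (rule ccontr)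
      assume "\<not> h t \<le> \<delta>"
      hence ht: "h t > \<delta>" by simp
      have st: "s < t" using ts ht s(2) by (cases "s = t") auto
      define S where "S = {s..t} \<inter> h -` {..\<delta>}"
      have clS: "closed S" unfolding S_def
        by (rule continuous_closed_preimage[OF cont[OF s(1)]]) auto
      have bS: "bdd_above S" unfolding S_def by (rule bdd_aboveI[of _ t]) auto
      have sS: "s \<in> S" unfolding S_def using st s by auto
      define r where "r = Sup S"
      have rS: "r \<in> S" unfolding r_def using closed_contains_Sup[OF _ bS clS] sS by auto
      hence r: "s \<le> r" "r \<le> t" "h r \<le> \<delta>" unfolding S_def by auto
      have rt: "r < t" using r ht by (cases "r = t") auto
      have above: "h u > \<delta>" if "r < u" "u \<le> t" for u
      proof (rule ccontr)
        assume "\<not> h u > \<delta>"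
        hence "u \<in> S" unfolding S_def using that r by auto
        hence "u \<le> r" unfolding r_def by (rule cSup_upper[OF _ bS])
        with that show False by simp
      qed
      obtain \<xi> where \<xi>: "r < \<xi>" "\<xi> < t" "h t - h r = (t - r) * h' \<xi>"
        using MVT2[OF rt, of h h'] der r s(1) by auto
      have "h' \<xi> \<le> -d" using dec[of \<xi>] above[of \<xi>] \<xi> r s(1) by auto
      hence "(t - r) * h' \<xi> < 0" using rt d by (simp add: mult_pos_neg)
      thus False using \<xi>(3) r(3) ht by linarith
    qed
  qed
qed

lemma scalar_decay:
  fixes z g :: "real \<Rightarrow> complex"
  assumes der: "\<And>t. t > a \<Longrightarrow> (z has_vector_derivative (lam * z t + g t)) (at t)"
    and lam: "Re lam < 0" and g: "(g \<longlongrightarrow> 0) at_top"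
  shows "(z \<longlongrightarrow> 0) at_top"
proof (rule tendstoI)
  fix e :: real assume e: "e > 0"
  define c where "c = - Re lam"
  have c: "c > 0" using lam by (simp add: c_def)
  define \<epsilon> where "\<epsilon> = e / 2"
  have ep: "\<epsilon> > 0" using e by (simp add: \<epsilon>_def)
  have "eventually (\<lambda>t. dist (g t) 0 < c * \<epsilon> / 2) at_top"
    using tendstoD[OF g, of "c * \<epsilon> / 2"] c ep by simp
  then obtain T0 where T0: "\<And>t. t \<ge> T0 \<Longrightarrow> norm (g t) < c * \<epsilon> / 2"
    unfolding eventually_at_top_linorder by auto
  define T where "T = max T0 (a + 1)"
  define h where "h t = z t \<bullet> z t" for t
  define h' where "h' t = 2 * (z t \<bullet> (lam * z t + g t))" for t
  have hd: "(h has_real_derivative h' t) (at t)" if "t \<ge> T" for t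
  proof -
    have "t > a" using that by (simp add: T_def)
    from der[OF this] have dz: "(z has_derivative (\<lambda>k. k *\<^sub>R (lam * z t + g t))) (at t)"
      by (simp add: has_vector_derivative_def)
    have d: "(h has_derivative (\<lambda>k. z t \<bullet> (k *\<^sub>R (lam * z t + g t)) + (k *\<^sub>R (lam * z t + g t)) \<bullet> z t)) (at t)"
      unfolding h_def by (rule has_derivative_inner[OF dz dz])
    have eq: "(\<lambda>k. z t \<bullet> (k *\<^sub>R (lam * z t + g t)) + (k *\<^sub>R (lam * z t + g t)) \<bullet> z t) = (\<lambda>k. h' t * k)"
    proof
      fix k
      show "z t \<bullet> (k *\<^sub>R (lam * z t + g t)) + (k *\<^sub>R (lam * z t + g t)) \<bullet> z t = h' t * k"
        unfolding h'_def inner_scaleR_left inner_scaleR_right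
        by (simp add: inner_commute[of "z t"] algebra_simps)
    qed
    show ?thesis unfolding has_field_derivative_def
      by (rule has_derivative_eq_rhs[OF d eq])
  qed
  have hdec: "h' t \<le> - (c * \<epsilon>\<^sup>2)" if t: "t \<ge> T" and ht: "h t \<ge> \<epsilon>\<^sup>2" for t
  proof -
    define w where "w = norm (z t)"
    have hw: "h t = w\<^sup>2" unfolding h_def w_def by (simp add: dot_square_norm)
    have w0: "w \<ge> 0" by (simp add: w_def)
    have we: "\<epsilon> \<le> w" using power2_le_imp_le[of \<epsilon> w] ht hw w0 by simp
    have i1: "z t \<bullet> (lam * z t) = - c * w\<^sup>2"
      unfolding w_def c_def cmod_power2 by (simp add: inner_complex_def algebra_simps power2_eq_square)
    have i2: "z t \<bullet> g t \<le> w * (c * \<epsilon> / 2)"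
    proof -
      have "z t \<bullet> g t \<le> w * norm (g t)" unfolding w_def by (rule norm_cauchy_schwarz)
      also have "\<dots> \<le> w * (c * \<epsilon> / 2)"
        using T0[of t] t w0 by (intro mult_left_mono) (auto simp: T_def)
      finally show ?thesis .
    qed
    have "h' t \<le> 2 * (- c * w\<^sup>2 + w * (c * \<epsilon> / 2))"
      unfolding h'_def inner_add_right i1 using i2 by simp
    also have "\<dots> = - c * w\<^sup>2 - c * w * (w - \<epsilon>)" by (simp add: algebra_simps power2_eq_square)
    also have "\<dots> \<le> - c * w\<^sup>2" using c w0 we by (simp add: mult_nonneg_nonneg)
    also have "\<dots> \<le> - c * \<epsilon>\<^sup>2" using c we ep by (simp add: power_mono)
    finally show ?thesis by simp
  qed
  have "eventually (\<lambda>t. h t \<le> \<epsilon>\<^sup>2) at_top"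
    by (rule eventually_below[OF hd hdec]) (use c ep in auto)
  thus "eventually (\<lambda>t. dist (z t) 0 < e) at_top"
  proof (rule eventually_mono)
    fix t assume "h t \<le> \<epsilon>\<^sup>2"
    hence "(norm (z t))\<^sup>2 \<le> \<epsilon>\<^sup>2" by (simp add: h_def dot_square_norm)
    hence "norm (z t) \<le> \<epsilon>" using power2_le_imp_le[of "norm (z t)" \<epsilon>] ep by simp
    thus "dist (z t) 0 < e" using e by (simp add: \<epsilon>_def)
  qed
qed

lemma schur_complex:
  fixes Ac :: "complex mat"
  assumes Ac: "Ac \<in> carrier_mat n n" and ev: "\<And>k. eigenvalue Ac k \<Longrightarrow> Re k < 0"
  obtains B P Q where "B \<in> carrier_mat n n" "P \<in> carrier_mat n n" "Q \<in> carrier_mat n n"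
    "P * Q = 1\<^sub>m n" "Q * Ac = B * Q" "\<And>i j. j < i \<Longrightarrow> i < n \<Longrightarrow> B $$ (i,j) = 0"
    "\<And>i. i < n \<Longrightarrow> Re (B $$ (i,i)) < 0"
proof -
  obtain es where es: "char_poly Ac = (\<Prod>a\<leftarrow>es. [:- a, 1:])"
    using char_poly_factorized[OF Ac] by blast
  obtain B P Q where sd: "schur_decomposition Ac es = (B,P,Q)"
    by (cases "schur_decomposition Ac es") auto
  from schur_decomposition[OF Ac es sd]
  have sim: "similar_mat_wit Ac B P Q" and ut: "upper_triangular B" and dg: "diag_mat B = es"
    by auto
  from sim Ac have car: "B \<in> carrier_mat n n" "P \<in> carrier_mat n n" "Q \<in> carrier_mat n n"
    and PQ: "P * Q = 1\<^sub>m n" and QP: "Q * P = 1\<^sub>m n" and AP: "Ac = P * B * Q"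
    unfolding similar_mat_wit_def Let_def by auto
  have "Q * Ac = Q * ((P * B) * Q)" using AP by simp
  also have "\<dots> = (Q * (P * B)) * Q"
    using assoc_mult_mat[OF car(3) mult_carrier_mat[OF car(2) car(1)] car(3)] by simp
  also have "Q * (P * B) = (Q * P) * B"
    using assoc_mult_mat[OF car(3) car(2) car(1)] by simp
  also have "\<dots> = B" using QP car by simp
  finally have QA: "Q * Ac = B * Q" .
  have low: "B $$ (i,j) = 0" if "j < i" "i < n" for i j
    using ut that car unfolding upper_triangular_def by auto
  have diag: "Re (B $$ (i,i)) < 0" if "i < n" for i
  proof -
    have "B $$ (i,i) \<in> set es" using that car dg[symmetric] by (auto simp: diag_mat_def)
    hence "poly (char_poly Ac) (B $$ (i,i)) = 0"
      unfolding es by (auto simp: poly_prod_list prod_list_zero_iff)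
    hence "eigenvalue Ac (B $$ (i,i))" using eigenvalue_root_char_poly[OF Ac] by simp
    thus ?thesis by (rule ev)
  qed
  show ?thesis using that car PQ QA low diag by blast
qed


lemma hurwitz_ev:
  fixes A :: "real^'n^'n"
  assumes hur: "hurwitz A" and phi: "bij_betw \<phi> {0..<n} (UNIV::'n set)"
    and evA: "eigenvalue (Matrix.mat n n (\<lambda>(i,j). complex_of_real (A $ \<phi> i $ \<phi> j))) k"
  shows "Re k < 0"
proof -
  let ?Ac = "Matrix.mat n n (\<lambda>(i,j). complex_of_real (A $ \<phi> i $ \<phi> j))"
  obtain v where v: "v \<in> carrier_vec n" "v \<noteq> 0\<^sub>v n" "?Ac *\<^sub>v v = k \<cdot>\<^sub>v v"
    using evA unfolding eigenvalue_def eigenvector_def by auto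
  define \<psi> where "\<psi> = inv_into {0..<n} \<phi>"
  have surj: "\<phi> ` {0..<n} = UNIV" using bij_betw_imp_surj_on[OF phi] .
  have psi: "\<psi> i < n" "\<phi> (\<psi> i) = i" for i
  proof -
    show "\<phi> (\<psi> i) = i" unfolding \<psi>_def by (rule bij_betw_inv_into_right[OF phi]) simp
    have "\<psi> i \<in> {0..<n}" unfolding \<psi>_def by (rule inv_into_into) (simp add: surj)
    thus "\<psi> i < n" by simp
  qed
  have psi2: "\<psi> (\<phi> j) = j" if "j < n" for j
    unfolding \<psi>_def using bij_betw_imp_inj_on[OF phi] that by (simp add: inv_into_f_f)
  define w :: "complex^'n" where "w = (\<chi> i. vec_index v (\<psi> i))"
  have wphi: "w $ \<phi> j = vec_index v j" if "j < n" for j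
    unfolding w_def using psi2[OF that] by simp
  have reidx: "(\<Sum>j\<in>UNIV. f j) = (\<Sum>l\<in>{0..<n}. f (\<phi> l))" for f :: "'n \<Rightarrow> complex"
    using sum.reindex_bij_betw[OF phi, of f] by simp
  have dimv: "dim_vec v = n" using v(1) by simp
  have "\<exists>j<n. vec_index v j \<noteq> 0"
  proof (rule ccontr)
    assume "\<not> ?thesis"
    hence "v = 0\<^sub>v n" by (intro eq_vecI) (auto simp: dimv)
    with v(2) show False by simp
  qed
  then obtain j0 where j0: "j0 < n" "vec_index v j0 \<noteq> 0" by blast
  have wne: "w \<noteq> 0"
  proof
    assume "w = 0"
    hence "w $ \<phi> j0 = 0" by simp
    with wphi[OF j0(1)] j0(2) show False by simp
  qed
  have eq: "(\<chi> i. \<Sum>j\<in>UNIV. complex_of_real (A$i$j) * w$j) = (\<chi> i. k * w$i)"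
  proof (rule Finite_Cartesian_Product.vec_eq_iff[THEN iffD2], rule allI)
    fix i
    have "(\<Sum>j\<in>UNIV. complex_of_real (A$i$j) * w$j) = (\<Sum>l\<in>{0..<n}. complex_of_real (A$i$\<phi> l) * w$\<phi> l)"
      by (rule reidx)
    also have "\<dots> = (\<Sum>l\<in>{0..<n}. ?Ac $$ (\<psi> i, l) * vec_index v l)"
      using psi(1)[of i] psi(2)[of i] wphi by (intro sum.cong) auto
    also have "\<dots> = vec_index (?Ac *\<^sub>v v) (\<psi> i)"
      using psi(1)[of i] dimv by (simp add: scalar_prod_def)
    also have "\<dots> = k * vec_index v (\<psi> i)"
      using v(3) psi(1)[of i] dimv by simp
    also have "\<dots> = k * w $ i" unfolding w_def by simp
    finally show "(\<chi> i. \<Sum>j\<in>UNIV. complex_of_real (A$i$j) * w$j) $ i = (\<chi> i. k * w$i) $ i" by simp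
  qed
  show ?thesis using hur wne eq unfolding hurwitz_def by blast
qed

lemma decay:
  fixes A :: "real^'n^'n" and x :: "real \<Rightarrow> real^'n"
  assumes hur: "hurwitz A"
    and sol: "\<And>t. t \<ge> t0 \<Longrightarrow> (x has_vector_derivative (A *v x t)) (at t within {t0..})"
  shows "(x \<longlongrightarrow> 0) at_top"
proof -
  define n where "n = CARD('n)"
  obtain \<phi> where phi: "bij_betw \<phi> {0..<n} (UNIV::'n set)"
    using ex_bij_betw_nat_finite[of "UNIV::'n set"] unfolding n_def by auto
  define Ac where "Ac = Matrix.mat n n (\<lambda>(i,j). complex_of_real (A $ \<phi> i $ \<phi> j))"
  have Ac: "Ac \<in> carrier_mat n n" unfolding Ac_def by simp
  have Acij: "Ac $$ (i,j) = complex_of_real (A $ \<phi> i $ \<phi> j)" if "i<n" "j<n" for i j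
    unfolding Ac_def using that by simp
  have evs: "Re k < 0" if "eigenvalue Ac k" for k
    using hurwitz_ev[OF hur phi] that unfolding Ac_def by blast
  obtain B P Q where car: "B \<in> carrier_mat n n" "P \<in> carrier_mat n n" "Q \<in> carrier_mat n n"
    and PQ: "P * Q = 1\<^sub>m n" and QA: "Q * Ac = B * Q"
    and low: "\<And>i j. j < i \<Longrightarrow> i < n \<Longrightarrow> B $$ (i,j) = 0"
    and diag: "\<And>i. i < n \<Longrightarrow> Re (B $$ (i,i)) < 0"
    using schur_complex[OF Ac evs] by blast
  have reidx: "(\<Sum>j\<in>UNIV. f j) = (\<Sum>l\<in>{0..<n}. f (\<phi> l))" for f :: "'n \<Rightarrow> real"
    using sum.reindex_bij_betw[OF phi, of f] by simp
  define X where "X = (\<lambda>j t. complex_of_real (x t $ \<phi> j))"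
  have dX: "(X j has_vector_derivative (\<Sum>l\<in>{0..<n}. Ac $$ (j,l) * X l t)) (at t)"
    if t: "t > t0" and j: "j < n" for j t
  proof -
    have "(x has_vector_derivative (A *v x t)) (at t within {t0<..})"
      using sol[of t] t by (auto intro: has_vector_derivative_within_subset)
    hence dx: "(x has_vector_derivative (A *v x t)) (at t)"
      using has_vector_derivative_within_open[of t "{t0<..}"] t by auto
    have "((\<lambda>s. x s $ \<phi> j) has_derivative (\<lambda>h. (h *\<^sub>R (A *v x t)) $ \<phi> j)) (at t)"
      using bounded_linear.has_derivative[OF bounded_linear_vec_nth dx[unfolded has_vector_derivative_def]] .
    hence "((\<lambda>s. x s $ \<phi> j) has_real_derivative (A *v x t) $ \<phi> j) (at t)"
      unfolding has_real_derivative_iff_has_vector_derivative has_vector_derivative_def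
      by (simp add: vector_scaleR_component)
    hence "(X j has_vector_derivative complex_of_real ((A *v x t) $ \<phi> j)) (at t)"
      unfolding X_def by (rule has_vector_derivative_of_real)
    moreover have "complex_of_real ((A *v x t) $ \<phi> j) = (\<Sum>l\<in>{0..<n}. Ac $$ (j,l) * X l t)"
    proof -
      have "(A *v x t) $ \<phi> j = (\<Sum>i\<in>UNIV. A $ \<phi> j $ i * x t $ i)" by (simp add: matrix_vector_mult_def)
      also have "\<dots> = (\<Sum>l\<in>{0..<n}. A $ \<phi> j $ \<phi> l * x t $ \<phi> l)" by (rule reidx)
      finally show ?thesis using j by (simp add: Acij X_def)
    qed
    ultimately show ?thesis by simp
  qed
  define z where "z = (\<lambda>k t. \<Sum>j\<in>{0..<n}. Q $$ (k,j) * X j t)"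
  have QAe: "(\<Sum>j\<in>{0..<n}. Q $$ (k,j) * Ac $$ (j,l)) = (\<Sum>m\<in>{0..<n}. B $$ (k,m) * Q $$ (m,l))"
    if "k<n" "l<n" for k l
  proof -
    have "(Q * Ac) $$ (k,l) = (B * Q) $$ (k,l)" using QA by simp
    thus ?thesis using that car Ac by (simp add: scalar_prod_def)
  qed
  have PQe: "(\<Sum>k\<in>{0..<n}. P $$ (j,k) * Q $$ (k,l)) = (if j = l then 1 else 0)"
    if "j<n" "l<n" for j l
  proof -
    have "(P * Q) $$ (j,l) = (1\<^sub>m n) $$ (j,l)" using PQ by simp
    thus ?thesis using that car by (simp add: scalar_prod_def)
  qed
  have dz: "(z k has_vector_derivative (B $$ (k,k) * z k t + (\<Sum>m\<in>{k<..<n}. B $$ (k,m) * z m t))) (at t)"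
    if t: "t > t0" and k: "k < n" for t k
  proof -
    have "(z k has_vector_derivative (\<Sum>j\<in>{0..<n}. Q $$ (k,j) * (\<Sum>l\<in>{0..<n}. Ac $$ (j,l) * X l t))) (at t)"
      unfolding z_def by (intro has_vector_derivative_sum has_vector_derivative_mult_right dX) (use t in auto)
    moreover have "(\<Sum>j\<in>{0..<n}. Q $$ (k,j) * (\<Sum>l\<in>{0..<n}. Ac $$ (j,l) * X l t))
        = (\<Sum>m\<in>{0..<n}. B $$ (k,m) * z m t)"
    proof -
      have "(\<Sum>j\<in>{0..<n}. Q $$ (k,j) * (\<Sum>l\<in>{0..<n}. Ac $$ (j,l) * X l t))
          = (\<Sum>l\<in>{0..<n}. (\<Sum>j\<in>{0..<n}. Q $$ (k,j) * Ac $$ (j,l)) * X l t)"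
        by (simp add: sum_distrib_left sum_distrib_right mult.assoc) (rule sum.swap)
      also have "\<dots> = (\<Sum>l\<in>{0..<n}. (\<Sum>m\<in>{0..<n}. B $$ (k,m) * Q $$ (m,l)) * X l t)"
        using QAe k by (intro sum.cong) auto
      also have "\<dots> = (\<Sum>m\<in>{0..<n}. B $$ (k,m) * z m t)"
        unfolding z_def by (simp add: sum_distrib_left sum_distrib_right mult.assoc) (rule sum.swap)
      finally show ?thesis .
    qed
    moreover have "(\<Sum>m\<in>{0..<n}. B $$ (k,m) * z m t) = B $$ (k,k) * z k t + (\<Sum>m\<in>{k<..<n}. B $$ (k,m) * z m t)"
    proof -
      have U: "{0..<n} = {0..<k} \<union> ({k} \<union> {k<..<n})" using k by auto
      have z0: "(\<Sum>m\<in>{0..<k}. B $$ (k,m) * z m t) = 0" using low k by simp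
      have "(\<Sum>m\<in>{0..<k} \<union> ({k} \<union> {k<..<n}). B $$ (k,m) * z m t)
          = (\<Sum>m\<in>{0..<k}. B $$ (k,m) * z m t) + (\<Sum>m\<in>{k} \<union> {k<..<n}. B $$ (k,m) * z m t)"
        by (rule sum.union_disjoint) auto
      also have "(\<Sum>m\<in>{k} \<union> {k<..<n}. B $$ (k,m) * z m t) = B $$ (k,k) * z k t + (\<Sum>m\<in>{k<..<n}. B $$ (k,m) * z m t)"
        by simp
      finally show ?thesis unfolding U z0 by simp
    qed
    ultimately show ?thesis by simp
  qed
  have zlim: "\<forall>k<n. n - k \<le> d \<longrightarrow> (z k \<longlongrightarrow> 0) at_top" for d
  proof (induction d)
    case 0 then show ?case by auto
  next
    case (Suc d)
    show ?case
    proof (intro allI impI)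
      fix k assume k: "k < n" "n - k \<le> Suc d"
      have "((\<lambda>t. \<Sum>m\<in>{k<..<n}. B $$ (k,m) * z m t) \<longlongrightarrow> 0) at_top"
      proof (rule tendsto_null_sum)
        fix m assume "m \<in> {k<..<n}"
        hence "m < n" "n - m \<le> d" using k by auto
        hence "(z m \<longlongrightarrow> 0) at_top" using Suc.IH by blast
        thus "((\<lambda>t. B $$ (k,m) * z m t) \<longlongrightarrow> 0) at_top" by (rule tendsto_mult_right_zero)
      qed
      moreover have "\<And>t. t > t0 \<Longrightarrow> (z k has_vector_derivative (B $$ (k,k) * z k t + (\<Sum>m\<in>{k<..<n}. B $$ (k,m) * z m t))) (at t)"
        using dz k(1) by blast
      ultimately show "(z k \<longlongrightarrow> 0) at_top"
        using scalar_decay[of t0 "z k" "B $$ (k,k)" "\<lambda>t. \<Sum>m\<in>{k<..<n}. B $$ (k,m) * z m t"] diag[OF k(1)]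
        by blast
    qed
  qed
  have zl: "(z k \<longlongrightarrow> 0) at_top" if "k<n" for k using zlim[of n] that by auto
  have Xz: "X j t = (\<Sum>k\<in>{0..<n}. P $$ (j,k) * z k t)" if j: "j<n" for j t
  proof -
    have "(\<Sum>k\<in>{0..<n}. P $$ (j,k) * z k t) = (\<Sum>l\<in>{0..<n}. (\<Sum>k\<in>{0..<n}. P $$ (j,k) * Q $$ (k,l)) * X l t)"
      unfolding z_def by (simp add: sum_distrib_left sum_distrib_right mult.assoc) (rule sum.swap)
    also have "\<dots> = (\<Sum>l\<in>{0..<n}. (if j = l then 1 else 0) * X l t)"
      using PQe j by (intro sum.cong) auto
    also have "\<dots> = (\<Sum>l\<in>{0..<n}. if j = l then X l t else 0)" by (intro sum.cong) auto
    also have "\<dots> = X j t" using j by simp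
    finally show ?thesis by simp
  qed
  have Xl: "(X j \<longlongrightarrow> 0) at_top" if j: "j<n" for j
  proof -
    have "((\<lambda>t. \<Sum>k\<in>{0..<n}. P $$ (j,k) * z k t) \<longlongrightarrow> 0) at_top"
      by (rule tendsto_null_sum, rule tendsto_mult_right_zero, rule zl) auto
    moreover have "X j = (\<lambda>t. \<Sum>k\<in>{0..<n}. P $$ (j,k) * z k t)" using Xz[OF j] by (simp add: fun_eq_iff)
    ultimately show ?thesis by simp
  qed
  show ?thesis
  proof (rule vec_tendstoI)
    fix i :: 'n
    obtain j where j: "j < n" "i = \<phi> j" using bij_betw_imp_surj_on[OF phi] by (metis UNIV_I atLeastLessThan_iff imageE)
    have "((\<lambda>t. Re (X j t)) \<longlongrightarrow> Re 0) at_top" by (rule tendsto_Re[OF Xl[OF j(1)]])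
    thus "((\<lambda>t. x t $ i) \<longlongrightarrow> 0 $ i) at_top" by (simp add: X_def j(2))
  qed
qed


lemma ftc_inf:
  fixes f f' :: "real \<Rightarrow> real"
  assumes der: "\<And>t. t \<ge> a \<Longrightarrow> (f has_real_derivative f' t) (at t within {a..})"
    and lim: "(f \<longlongrightarrow> L) at_top"
  shows "(f' has_integral (L - f a)) {a..}"
proof -
  have fin: "(f' has_integral (f d - f a)) {a..d}" if "a \<le> d" for d
  proof (rule fundamental_theorem_of_calculus[OF that])
    fix t assume "t \<in> {a..d}"
    hence "(f has_real_derivative f' t) (at t within {a..d})"
      using DERIV_subset[OF der[of t], of "{a..d}"] by auto
    thus "(f has_vector_derivative f' t) (at t within {a..d})"
      by (simp add: has_real_derivative_iff_has_vector_derivative)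
  qed
  have nb: "\<not> (\<exists>c d. {a..} = cbox c d)"
  proof
    assume "\<exists>c d. {a..} = cbox c d"
    then obtain c d :: real where "{a..} = cbox c d" by blast
    hence "max a d + 1 \<in> cbox c d" by auto
    thus False by auto
  qed
  show ?thesis
  proof (subst has_integral_alt, simp only: nb if_False, intro allI impI)
    fix e :: real assume e: "e > 0"
    from lim e obtain B where B: "\<And>t. t \<ge> B \<Longrightarrow> dist (f t) L < e"
      unfolding tendsto_iff eventually_at_top_linorder by blast
    show "\<exists>B>0. \<forall>c d. ball 0 B \<subseteq> cbox c d \<longrightarrow>
          (\<exists>z. ((\<lambda>x. if x \<in> {a..} then f' x else 0) has_integral z) (cbox c d) \<and> norm (z - (L - f a)) < e)"
    proof (rule exI[of _ "\<bar>a\<bar> + \<bar>B\<bar> + 1"], intro conjI allI impI)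
      fix c d :: real assume sub: "ball 0 (\<bar>a\<bar> + \<bar>B\<bar> + 1) \<subseteq> cbox c d"
      have "-(\<bar>a\<bar> + \<bar>B\<bar> + 1/2) \<in> cbox c d" "\<bar>a\<bar> + \<bar>B\<bar> + 1/2 \<in> cbox c d"
        using sub by (auto simp: subset_iff)
      hence "c \<le> -(\<bar>a\<bar> + \<bar>B\<bar> + 1/2)" "\<bar>a\<bar> + \<bar>B\<bar> + 1/2 \<le> d"
        by (simp_all add: cbox_interval)
      hence cd: "c \<le> a" "a \<le> d" "B \<le> d"
        using abs_ge_self[of a] abs_ge_minus_self[of a] abs_ge_self[of B] by linarith+
      have "((\<lambda>x. if x \<in> {a..} then f' x else 0) has_integral (f d - f a)) {c..d}"
      proof -
        have "((\<lambda>x. if x \<in> {a..d} then f' x else 0) has_integral (f d - f a)) {c..d}"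
          using has_integral_restrict_closed_subinterval[OF fin[OF cd(2), folded cbox_interval], of c d] cd
          by (simp add: cbox_interval)
        thus ?thesis
          by (rule has_integral_eq[rotated]) simp
      qed
      moreover have "norm (f d - f a - (L - f a)) < e"
        using B[OF cd(3)] by (simp add: dist_real_def)
      ultimately show "\<exists>z. ((\<lambda>x. if x \<in> {a..} then f' x else 0) has_integral z) (cbox c d) \<and> norm (z - (L - f a)) < e"
        by auto
    qed (simp add: add_pos_nonneg)
  qed
qed

lemma mv_scale: "(M::real^'n^'m) *v (h *\<^sub>R v) = h *\<^sub>R (M *v v)"
  by (simp add: matrix_vector_mult_scaleR)

lemma quad_deriv:
  assumes "(x has_vector_derivative x') (at t within S)"
  shows "((\<lambda>t. quad M (x t)) has_real_derivative (x' \<bullet> (M *v x t) + x t \<bullet> (M *v x'))) (at t within S)"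
proof -
  have dx: "(x has_derivative (\<lambda>h. h *\<^sub>R x')) (at t within S)"
    using assms by (simp add: has_vector_derivative_def)
  have dm: "((\<lambda>t. M *v x t) has_derivative (\<lambda>h. M *v (h *\<^sub>R x'))) (at t within S)"
    by (rule bounded_linear.has_derivative[OF matrix_vector_mul_bounded_linear dx])
  have d: "((\<lambda>t. x t \<bullet> (M *v x t)) has_derivative
        (\<lambda>h. x t \<bullet> (M *v (h *\<^sub>R x')) + (h *\<^sub>R x') \<bullet> (M *v x t))) (at t within S)"
    by (rule has_derivative_inner[OF dx dm])
  have eq: "(\<lambda>h. x t \<bullet> (M *v (h *\<^sub>R x')) + (h *\<^sub>R x') \<bullet> (M *v x t)) = (\<lambda>h. (x' \<bullet> (M *v x t) + x t \<bullet> (M *v x')) * h)"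
  proof
    fix h
    show "x t \<bullet> (M *v (h *\<^sub>R x')) + (h *\<^sub>R x') \<bullet> (M *v x t) = (x' \<bullet> (M *v x t) + x t \<bullet> (M *v x')) * h"
        unfolding mv_scale inner_scaleR_left inner_scaleR_right by (simp add: algebra_simps)
  qed
  show ?thesis unfolding quad_def has_field_derivative_def
    by (rule has_derivative_eq_rhs[OF d eq])
qed

lemma dot_transpose: "((A::real^'n^'m) *v x) \<bullet> y = x \<bullet> (transpose A *v y)"
proof -
  have "(A *v x) \<bullet> y = y \<bullet> (A *v x)" by (rule inner_commute)
  also have "\<dots> = (y v* A) \<bullet> x" by (rule dot_lmul_matrix[symmetric])
  also have "\<dots> = x \<bullet> (y v* A)" by (rule inner_commute)
  finally show ?thesis by (simp add: transpose_matrix_vector)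
qed

lemma quad_diff: "quad (Y - Z) v = quad Y v - quad Z v"
  by (simp add: quad_def matrix_vector_mult_diff_rdistrib inner_diff_right)


lemma mat_sub_r: "((Y::real^'n^'n) - Z) ** A = Y ** A - Z ** A"
  by (simp add: matrix_matrix_mult_def Finite_Cartesian_Product.vec_eq_iff sum_subtractf left_diff_distrib)

lemma mat_sub_l: "(A::real^'n^'n) ** (Y - Z) = A ** Y - A ** Z"
  by (simp add: matrix_matrix_mult_def Finite_Cartesian_Product.vec_eq_iff sum_subtractf right_diff_distrib)

theorem theorem4:
  fixes A Q Ystar :: "real^'n^'n" and t0 :: real and x0 :: "real^'n"
    and x :: "real \<Rightarrow> real^'n"
  assumes "hurwitz A"
    and "psd Q"
    and sol: "\<And>t. t \<ge> t0 \<Longrightarrow> (x has_vector_derivative (A *v x t)) (at t within {t0..})"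
    and init: "x t0 = x0"
    and lyap: "transpose A ** Ystar + Ystar ** A + Q = 0"
  shows "(\<forall>Y. psd Y \<longrightarrow> Jeq A Q t0 x0 x Y \<ge> quad Ystar x0)
       \<and> (t0 = 0 \<longrightarrow> (\<forall>Y. Jeq A Q t0 x0 x Y = quad Ystar x0))"
proof -
  have dec: "(x \<longlongrightarrow> 0) at_top" by (rule decay[OF assms(1) sol])
  have key: "Jeq A Q t0 x0 x Y = quad Ystar x0" for Y
  proof -
    define M where "M = Y - Ystar"
    have Qeq: "Q = - (transpose A ** Ystar + Ystar ** A)"
      by (subst eq_commute, subst neg_eq_iff_add_eq_0) (rule lyap)
    have Meq: "transpose A ** M + M ** A = transpose A ** Y + Y ** A + Q"
      unfolding M_def Qeq by (simp add: mat_sub_l mat_sub_r algebra_simps)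
    have der: "((\<lambda>t. quad M (x t)) has_real_derivative quad (transpose A ** Y + Y ** A + Q) (x t)) (at t within {t0..})"
      if "t \<ge> t0" for t
    proof -
      have "(A *v x t) \<bullet> (M *v x t) + x t \<bullet> (M *v (A *v x t)) = quad (transpose A ** M + M ** A) (x t)"
        unfolding quad_def dot_transpose
        by (simp add: matrix_vector_mul_assoc matrix_vector_mult_add_rdistrib inner_add_right)
      thus ?thesis using quad_deriv[OF sol[OF that], of M] Meq by simp
    qed
    have lim: "((\<lambda>t. quad M (x t)) \<longlongrightarrow> 0) at_top"
    proof -
      have "((\<lambda>t. x t \<bullet> (M *v x t)) \<longlongrightarrow> 0 \<bullet> (M *v 0)) at_top"
        by (intro tendsto_inner dec bounded_linear.tendsto[OF matrix_vector_mul_bounded_linear])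
      thus ?thesis by (simp add: quad_def)
    qed
    have "((\<lambda>t. quad (transpose A ** Y + Y ** A + Q) (x t)) has_integral (0 - quad M (x t0))) {t0..}"
      by (rule ftc_inf[OF der lim])
    hence "integral {t0..} (\<lambda>t. quad (transpose A ** Y + Y ** A + Q) (x t)) = - quad M x0"
      using init by (simp add: integral_unique)
    thus ?thesis unfolding Jeq_def M_def quad_diff by simp
  qed
  show ?thesis
  proof (intro conjI allI impI)
    fix Y show "quad Ystar x0 \<le> Jeq A Q t0 x0 x Y" using key[of Y] by simp
  next
    fix Y show "Jeq A Q t0 x0 x Y = quad Ystar x0" by (rule key)
  qed
qed


end
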